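(* Let $D$ be a Dyck path of semilength $n$ with column-area sequence $(c_1,\dots,c_{n+1})$, let $\mathcal D=\{k\in\{1,\dots,n\}: c_{k+1}=c_k-1\}$, and let $\pi$ be the permutation associated with $D$ by the Billey–Jockusch–Stanley bijection. Then $k\in\mathcal D$ if and only if $\pi(k)\le k$ (i.e. $k$ is a fixpoint or a deficiency of $\pi$).
   Context: Work in an $n\times n$ array of unit cells; the cell $(i,j)$ is the one in column $i$ (columns numbered $1,\dots,n$ from left to right) and row $j$ (rows numbered $1,\dots,n$ from bottom to top), i.e. the square $[i-1,i]\times[j-1,j]$. A Dyck path of semilength $n$ is a lattice path from $(0,0)$ to $(n,n)$ with unit north and east steps that never goes below the line $y=x$. Column-area sequence: for $1\le k\le n$, $c_k$ is the number of full cells in column $k$ strictly between the $k$-th east step of $D$ and the diagonal; equivalently, if the $k$-th east step lies at height $y_k$, then $c_k=y_k-k$; and $c_{n+1}=-1$. A valley of $D$ is an east step immediately followed by a north step; if the east step is the $k$-th east step and the north step is the $\ell$-th north step, the valley is at position $(k,\ell)$, the cell enclosed by these two steps. Billey–Jockusch–Stanley bijection: put a cross in every valley cell of $D$; then, for the columns $i=1,2,\dots,n$ in this order, if column $i$ does not yet contain a cross, put a cross in the lowest cell of column $i$ whose row does not yet contain a cross. The crosses form a permutation matrix, and $\pi(i)$ is the row of the cross in column $i$. An index $k$ is a fixpoint of $\pi$ if $\pi(k)=k$ and a deficiency if $\pi(k)<k$. *)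

theory Defs
  imports Main
begin

text \<open>A lattice path is encoded as a list of steps: True = north step, False = east step.\<close>

definition nN :: "bool list \<Rightarrow> nat" where
  "nN w = length (filter (\<lambda>s. s) w)"

definition nE :: "bool list \<Rightarrow> nat" where
  "nE w = length (filter (\<lambda>s. \<not> s) w)"

definition dyck :: "nat \<Rightarrow> bool list \<Rightarrow> bool" where
  "dyck n w \<longleftrightarrow> length w = 2 * n \<and> nN w = n \<and> nE w = n \<and>
     (\<forall>i \<le> length w. nE (take i w) \<le> nN (take i w))"

text \<open>0-based index in the list of the k-th east step (k \<ge> 1).\<close>
definition epos :: "bool list \<Rightarrow> nat \<Rightarrow> nat" where
  "epos w k = (LEAST p. p < length w \<and> \<not> w ! p \<and> nE (take (Suc p) w) = k)"

definition eheight :: "bool list \<Rightarrow> nat \<Rightarrow> nat" where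
  "eheight w k = nN (take (epos w k) w)"

definition colarea :: "nat \<Rightarrow> bool list \<Rightarrow> nat \<Rightarrow> int" where
  "colarea n w k = (if k = n + 1 then -1 else int (eheight w k) - int k)"

text \<open>Valleys: the k-th east step immediately followed by a north step, which is the
  (y_k + 1)-th north step; the valley cell is (k, y_k + 1).\<close>
definition valleys :: "nat \<Rightarrow> bool list \<Rightarrow> (nat \<times> nat) set" where
  "valleys n w = {(k, eheight w k + 1) | k. 1 \<le> k \<and> k \<le> n \<and>
      Suc (epos w k) < length w \<and> w ! Suc (epos w k)}"

text \<open>Billey-Jockusch-Stanley construction: crosses at all valley cells; then columns
  1,...,i processed in order, a column without a cross gets the lowest row (in 1..n)
  not yet containing a cross. bjs_aux n V i gives the rows assigned to columns 1..i.\<close>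
fun bjs_aux :: "nat \<Rightarrow> (nat \<times> nat) set \<Rightarrow> nat \<Rightarrow> nat \<Rightarrow> nat" where
  "bjs_aux n V 0 = (\<lambda>_. 0)"
| "bjs_aux n V (Suc i) =
     (let f = bjs_aux n V i in
      if \<exists>l. (Suc i, l) \<in> V
      then f(Suc i := (THE l. (Suc i, l) \<in> V))
      else f(Suc i := (LEAST r. 1 \<le> r \<and> r \<le> n \<and> r \<notin> snd ` V \<and> r \<notin> f ` {1..i})))"

definition bjs :: "nat \<Rightarrow> bool list \<Rightarrow> nat \<Rightarrow> nat" where
  "bjs n w = bjs_aux n (valleys n w) n"

end

theory Submission
  imports Defs
begin

lemma nN_app[simp]: "nN (xs @ ys) = nN xs + nN ys" by (simp add: nN_def)
lemma nE_app[simp]: "nE (xs @ ys) = nE xs + nE ys" by (simp add: nE_def)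
lemma nN_single[simp]: "nN [b] = (if b then 1 else 0)" by (simp add: nN_def)
lemma nE_single[simp]: "nE [b] = (if b then 0 else 1)" by (simp add: nE_def)
lemma nE_nil[simp]: "nE [] = 0" by (simp add: nE_def)

lemma take_split: "i \<le> j \<Longrightarrow> take j w = take i w @ take (j-i) (drop i w)"
  by (metis le_add_diff_inverse take_add)

lemma nN_take_mono: "i \<le> j \<Longrightarrow> nN (take i w) \<le> nN (take j w)"
  by (subst take_split[of i j], auto)
lemma nE_take_mono: "i \<le> j \<Longrightarrow> nE (take i w) \<le> nE (take j w)"
  by (subst take_split[of i j], auto)
lemma nN_take_le: "nN (take i w) \<le> nN w"
  by (metis append_take_drop_id le_add1 nN_app)

lemma nN_takeSuc: "p < length w \<Longrightarrow> nN (take (Suc p) w) = nN (take p w) + (if w!p then 1 else 0)"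
  by (simp add: take_Suc_conv_app_nth)
lemma nE_takeSuc: "p < length w \<Longrightarrow> nE (take (Suc p) w) = nE (take p w) + (if w!p then 0 else 1)"
  by (simp add: take_Suc_conv_app_nth)

lemma epos_ex:
  assumes "1 \<le> k" "k \<le> nE w"
  shows "\<exists>p. p < length w \<and> \<not> w!p \<and> nE (take (Suc p) w) = k"
proof -
  define P where "P i = (k \<le> nE (take i w))" for i
  have PL: "P (length w)" using assms by (simp add: P_def)
  define i0 where "i0 = (LEAST i. P i)"
  have Pi0: "P i0" unfolding i0_def by (rule LeastI, rule PL)
  have le: "i0 \<le> length w" unfolding i0_def by (rule Least_le, rule PL)
  have "i0 \<noteq> 0"
  proof
    assume "i0 = 0" then show False using Pi0 assms by (simp add: P_def)
  qed
  then obtain p where p: "i0 = Suc p" by (cases i0) auto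
  have "\<not> P p" using p i0_def not_less_Least by (metis lessI)
  then have "nE (take p w) < k" by (simp add: P_def)
  moreover have pl: "p < length w" using le p by simp
  ultimately show ?thesis using Pi0 p nE_takeSuc[OF pl] unfolding P_def
    by (intro exI[of _ p]) (auto split: if_splits)
qed

lemma epos_props:
  assumes "1 \<le> k" "k \<le> nE w"
  shows "epos w k < length w \<and> \<not> w!(epos w k) \<and> nE (take (Suc (epos w k)) w) = k"
  unfolding epos_def using epos_ex[OF assms] by (rule LeastI_ex)

lemma epos_next:
  assumes "1 \<le> k" "k < nE w"
  shows "Suc (epos w k) < length w"
proof (rule ccontr)
  assume "\<not> ?thesis"
  then have "take (Suc (epos w k)) w = w" by simp
  then show False using epos_props[of k w] assms by simp
qed

lemma epos_consec:
  assumes "1 \<le> k" "k < nE w" "\<not> w ! Suc (epos w k)"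
  shows "epos w (Suc k) = Suc (epos w k)"
proof -
  let ?p = "epos w k"
  have pr: "?p < length w" "\<not> w!?p" "nE (take (Suc ?p) w) = k" using epos_props[of k w] assms by auto
  have sl: "Suc ?p < length w" using epos_next assms by blast
  have q: "nE (take (Suc (Suc ?p)) w) = Suc k" using nE_takeSuc[OF sl] pr assms by simp
  show ?thesis unfolding epos_def[of w "Suc k"]
  proof (rule Least_equality)
    show "Suc ?p < length w \<and> \<not> w ! Suc ?p \<and> nE (take (Suc (Suc ?p)) w) = Suc k" using sl assms q by simp
  next
    fix y assume y: "y < length w \<and> \<not> w ! y \<and> nE (take (Suc y) w) = Suc k"
    show "Suc ?p \<le> y"
    proof (rule ccontr)
      assume "\<not> Suc ?p \<le> y"
      then have "nE (take (Suc y) w) \<le> nE (take (Suc ?p) w)" by (intro nE_take_mono) simp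
      then show False using y pr by simp
    qed
  qed
qed

lemma epos_gap:
  assumes "1 \<le> k" "k < nE w" "w ! Suc (epos w k)"
  shows "Suc (Suc (epos w k)) \<le> epos w (Suc k)"
proof -
  let ?p = "epos w k" and ?q = "epos w (Suc k)"
  have pr: "?p < length w" "\<not> w!?p" "nE (take (Suc ?p) w) = k" using epos_props[of k w] assms by auto
  have qr: "?q < length w" "\<not> w!?q" "nE (take (Suc ?q) w) = Suc k" using epos_props[of "Suc k" w] assms by auto
  have "Suc ?p < Suc ?q"
  proof (rule ccontr)
    assume "\<not> ?thesis"
    then have "nE (take (Suc ?q) w) \<le> nE (take (Suc ?p) w)" by (intro nE_take_mono) simp
    then show False using pr qr by simp
  qed
  moreover have "?q \<noteq> Suc ?p" using qr assms by auto
  ultimately show ?thesis by simp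
qed

context
  fixes n w
  assumes D: "dyck n w"
begin

lemma lenw: "length w = 2*n" and nNw: "nN w = n" and nEw: "nE w = n"
  and dy: "\<And>i. i \<le> length w \<Longrightarrow> nE (take i w) \<le> nN (take i w)"
  using D by (auto simp: dyck_def)

lemma eheight_ge: assumes "1 \<le> k" "k \<le> n" shows "k \<le> eheight w k"
proof -
  have pr: "epos w k < length w" "\<not> w!(epos w k)" "nE (take (Suc (epos w k)) w) = k"
    using epos_props[of k w] assms nEw by auto
  have "k \<le> nN (take (Suc (epos w k)) w)" using dy[of "Suc (epos w k)"] pr by simp
  also have "\<dots> = eheight w k" using nN_takeSuc[OF pr(1)] pr(2) by (simp add: eheight_def)
  finally show ?thesis .
qed

lemma no_valley_n: assumes "1 \<le> n" "Suc (epos w n) < length w" shows "\<not> w ! Suc (epos w n)"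
proof
  assume a: "w ! Suc (epos w n)"
  let ?p = "epos w n"
  have pr: "?p < length w" "\<not> w!?p" "nE (take (Suc ?p) w) = n"
    using epos_props[of n w] assms nEw by auto
  have "n \<le> nN (take (Suc ?p) w)" using dy[of "Suc ?p"] pr by simp
  then have "Suc n \<le> nN (take (Suc (Suc ?p)) w)" using nN_takeSuc[OF assms(2)] a by simp
  then show False using nN_take_le[of "Suc (Suc ?p)" w] nNw by simp
qed

lemma eheight_n: assumes "1 \<le> n" shows "eheight w n = n"
  using eheight_ge[of n] assms nN_take_le[of "epos w n" w] nNw by (simp add: eheight_def)

lemma valley_iff: assumes "1 \<le> k" "k \<le> n"
  shows "(\<exists>l. (k,l) \<in> valleys n w) \<longleftrightarrow> Suc (epos w k) < length w \<and> w ! Suc (epos w k)"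
  using assms by (auto simp: valleys_def)

lemma valley_mem: "(j,l) \<in> valleys n w \<Longrightarrow> 1 \<le> j \<and> j \<le> n \<and> l = eheight w j + 1"
  by (auto simp: valleys_def)

end

lemma bjs_aux_stable: "j \<le> i \<Longrightarrow> bjs_aux n V i j = bjs_aux n V j j"
proof (induction i)
  case 0 then show ?case by simp
next
  case (Suc i)
  show ?case
  proof (cases "j = Suc i")
    case True then show ?thesis by simp
  next
    case False
    then have "j \<le> i" using Suc by simp
    then show ?thesis using Suc False by (simp add: Let_def)
  qed
qed

lemma bjs_aux_valley:
  assumes "(k,l) \<in> V" "\<And>l'. (k,l') \<in> V \<Longrightarrow> l' = l" "1 \<le> k"
  shows "bjs_aux n V k k = l"
proof -
  obtain i where k: "k = Suc i" using assms(3) by (cases k) auto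
  have "(THE l. (k,l) \<in> V) = l" using assms by blast
  then show ?thesis using assms(1) k by (auto simp: Let_def)
qed

lemma bjs_aux_novalley:
  assumes "\<not> (\<exists>l. (Suc i,l) \<in> V)"
  shows "bjs_aux n V (Suc i) (Suc i) = (LEAST r. 1 \<le> r \<and> r \<le> n \<and> r \<notin> snd ` V \<and> r \<notin> bjs_aux n V i ` {1..i})"
  using assms by (simp add: Let_def)

theorem mainTheorem3:
  fixes n :: nat and w :: "bool list" and k :: nat
  assumes "dyck n w"
    and "1 \<le> k" and "k \<le> n"
  shows "colarea n w (k + 1) = colarea n w k - 1 \<longleftrightarrow> bjs n w k \<le> k"
proof -
  note D = assms(1)
  let ?V = "valleys n w"
  have nEw: "nE w = n" using D by (simp add: dyck_def)
  have bjsk: "bjs n w k = bjs_aux n ?V k k" unfolding bjs_def using bjs_aux_stable assms by blast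
  have uniq: "\<And>j l l'. (j,l) \<in> ?V \<Longrightarrow> (j,l') \<in> ?V \<Longrightarrow> l' = l" using valley_mem[OF D] by metis
  show ?thesis
  proof (cases "\<exists>l. (k,l) \<in> ?V")
    case True
    then obtain l where l: "(k,l) \<in> ?V" by blast
    have lv: "l = eheight w k + 1" using valley_mem[OF D l] by simp
    have b: "bjs n w k = l" using bjsk bjs_aux_valley[OF l uniq[OF l]] assms by metis
    have gt: "k < l" using eheight_ge[OF D assms(2,3)] lv by simp
    have vv: "Suc (epos w k) < length w \<and> w ! Suc (epos w k)" using valley_iff[OF D assms(2,3)] True by blast
    have kn: "k < n"
    proof (rule ccontr)
      assume "\<not> k < n" then have "k = n" using assms by simp
      then show False using no_valley_n[OF D] vv assms by auto
    qed
    have g: "Suc (Suc (epos w k)) \<le> epos w (Suc k)" using epos_gap[of k w] assms kn nEw vv by simp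
    have "nN (take (Suc (Suc (epos w k))) w) \<le> eheight w (Suc k)"
      unfolding eheight_def using nN_take_mono[OF g] .
    moreover have "nN (take (Suc (Suc (epos w k))) w) = Suc (eheight w k)"
      using nN_takeSuc[of "Suc (epos w k)" w] nN_takeSuc[of "epos w k" w] vv epos_props[of k w] assms nEw
      by (simp add: eheight_def)
    ultimately have "eheight w k < eheight w (Suc k)" by simp
    then have "colarea n w (k + 1) \<noteq> colarea n w k - 1" using kn by (simp add: colarea_def)
    then show ?thesis using b gt by simp
  next
    case False
    have lhs: "colarea n w (k + 1) = colarea n w k - 1"
    proof (cases "k = n")
      case True then show ?thesis using eheight_n[OF D] assms by (simp add: colarea_def)
    next
      case kn: False
      then have kn: "k < n" using assms by simp
      have sl: "Suc (epos w k) < length w" using epos_next[of k w] assms kn nEw by simp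
      then have east: "\<not> w ! Suc (epos w k)" using False valley_iff[OF D assms(2,3)] by blast
      have c: "epos w (Suc k) = Suc (epos w k)" using epos_consec[of k w] assms kn nEw east by simp
      have pr: "epos w k < length w" "\<not> w!(epos w k)" using epos_props[of k w] assms nEw by auto
      have "eheight w (Suc k) = eheight w k" unfolding eheight_def c
        using nN_takeSuc[OF pr(1)] pr(2) by simp
      then show ?thesis using kn by (simp add: colarea_def)
    qed
    obtain i where ki: "k = Suc i" using assms(2) by (cases k) auto
    let ?f = "bjs_aux n ?V i"
    have b: "bjs n w k = (LEAST r. 1 \<le> r \<and> r \<le> n \<and> r \<notin> snd ` ?V \<and> r \<notin> ?f ` {1..i})"
      using bjsk bjs_aux_novalley False ki by simp
    have sub: "{1..k} \<inter> (snd ` ?V \<union> ?f ` {1..i}) \<subseteq> ?f ` {1..i}"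
    proof
      fix r assume r: "r \<in> {1..k} \<inter> (snd ` ?V \<union> ?f ` {1..i})"
      show "r \<in> ?f ` {1..i}"
      proof (cases "r \<in> snd ` ?V")
        case True
        then obtain j where j: "(j,r) \<in> ?V" by force
        have jm: "1 \<le> j" "j \<le> n" "r = eheight w j + 1" using valley_mem[OF D j] by auto
        have "j \<le> eheight w j" using eheight_ge[OF D jm(1,2)] .
        then have ji: "j \<le> i" using jm r ki by simp
        have "?f j = bjs_aux n ?V j j" using bjs_aux_stable[OF ji] .
        also have "\<dots> = r" using bjs_aux_valley[OF j uniq[OF j] jm(1)] by metis
        finally show ?thesis using ji jm by force
      next
        case False then show ?thesis using r by blast
      qed
    qed
    have "card ({1..k} \<inter> (snd ` ?V \<union> ?f ` {1..i})) \<le> card (?f ` {1..i})"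
      by (rule card_mono[OF _ sub]) simp
    also have "\<dots> \<le> i" using card_image_le[of "{1..i}" ?f] by simp
    finally have "card ({1..k} \<inter> (snd ` ?V \<union> ?f ` {1..i})) < card {1..k}" using ki by simp
    then have "\<not> {1..k} \<subseteq> snd ` ?V \<union> ?f ` {1..i}"
      by (metis Int_absorb2 less_irrefl)
    then obtain r where r: "r \<in> {1..k}" "r \<notin> snd ` ?V" "r \<notin> ?f ` {1..i}" by blast
    have "bjs n w k \<le> r" unfolding b by (rule Least_le) (use r assms in auto)
    then show ?thesis using lhs r by simp
  qed
qed

end
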